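(* A descriptive $\mathsf{MS4}$-frame $\mathfrak{G}=(Y,R,E)$ validates $\mathsf{GKur}$ if and only if it satisfies the global Kuroda principle: $E[\operatorname{qmax}Y]=\operatorname{qmax}Y$ (equivalently, for every $x\in\operatorname{qmax}Y$, $E[x]\subseteq\operatorname{qmax}Y$).
   Context: $\mathsf{MIPC}$ is the smallest set of formulas in the bimodal language $\mathcal{L}_{\forall\exists}$ containing all theorems of $\mathsf{IPC}$; $\forall(p\wedge q)\leftrightarrow(\forall p\wedge\forall q)$, $\forall p\to p$, $\forall p\to\forall\forall p$; $\exists(p\vee q)\leftrightarrow(\exists p\vee\exists q)$, $p\to\exists p$, $\exists\exists p\to\exists p$, $(\exists p\wedge\exists q)\to\exists(\exists p\wedge q)$; $\exists\forall p\to\forall p$, $\exists p\to\forall\exists p$; closed under modus ponens, substitution and $\varphi/\forall\varphi$. $\mathsf{Kur}=\mathsf{MIPC}+\forall\neg\neg p\to\neg\neg\forall p$. $\mathsf{MS4}$ is the smallest set of formulas in the classical bimodal language $\mathcal{L}_{\Box\forall}$ containing all classical tautologies, the $\mathsf{S4}$ axioms for $\Box$, the $\mathsf{S5}$ axioms for $\forall$, and $\Box\forall p\to\forall\Box p$, closed under modus ponens, substitution, $\Box$- and $\forall$-necessitation. $\mathsf{GKur}=\mathsf{MS4}+\{\varphi^t:\mathsf{Kur}\vdash\varphi\}$, with $(-)^t$ the Gödel translation: $\bot^t=\bot$, $p^t=\Box p$, $(\varphi\wedge\psi)^t=\varphi^t\wedge\psi^t$, $(\varphi\vee\psi)^t=\varphi^t\vee\psi^t$,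 $(\varphi\to\psi)^t=\Box(\neg\varphi^t\vee\psi^t)$, $(\forall\varphi)^t=\Box\forall\varphi^t$, $(\exists\varphi)^t=\exists\varphi^t$ (where $\exists=\neg\forall\neg$). A descriptive $\mathsf{MS4}$-frame is $(Y,R,E)$ with $Y$ a Stone space, $R$ a continuous quasi-order, $E$ a continuous equivalence relation (continuous: $R[x]$ closed for all $x$, $R^{-1}[U]$ clopen for clopen $U$), such that $xEy$, $yRz$ imply $\exists u$ with $xRu$, $uEz$. Valuations assign clopen sets; $\Box$ is interpreted via $R$, $\forall$ via $E$. $\operatorname{qmax}Y=\{x: xRy\Rightarrow yRx\}$. *)

theory Defs
  imports "HOL-Analysis.Analysis"
begin

datatype ifm = IBot | IVar nat | IAnd ifm ifm | IOr ifm ifm | IImp ifm ifm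
  | IAll ifm | IEx ifm

definition INeg :: "ifm \<Rightarrow> ifm" where "INeg a = IImp a IBot"
definition IIff :: "ifm \<Rightarrow> ifm \<Rightarrow> ifm" where "IIff a b = IAnd (IImp a b) (IImp b a)"

primrec isubst :: "(nat \<Rightarrow> ifm) \<Rightarrow> ifm \<Rightarrow> ifm" where
  "isubst s IBot = IBot"
| "isubst s (IVar n) = s n"
| "isubst s (IAnd a b) = IAnd (isubst s a) (isubst s b)"
| "isubst s (IOr a b) = IOr (isubst s a) (isubst s b)"
| "isubst s (IImp a b) = IImp (isubst s a) (isubst s b)"
| "isubst s (IAll a) = IAll (isubst s a)"
| "isubst s (IEx a) = IEx (isubst s a)"

text \<open>Hilbert-style axiom schemes of IPC (all their instances in the bimodal language;
  together with closure under substitution this gives all theorems of IPC).\<close>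
inductive ipc_axiom :: "ifm \<Rightarrow> bool" where
  "ipc_axiom (IImp a (IImp b a))"
| "ipc_axiom (IImp (IImp a (IImp b c)) (IImp (IImp a b) (IImp a c)))"
| "ipc_axiom (IImp (IAnd a b) a)"
| "ipc_axiom (IImp (IAnd a b) b)"
| "ipc_axiom (IImp a (IImp b (IAnd a b)))"
| "ipc_axiom (IImp a (IOr a b))"
| "ipc_axiom (IImp b (IOr a b))"
| "ipc_axiom (IImp (IImp a c) (IImp (IImp b c) (IImp (IOr a b) c)))"
| "ipc_axiom (IImp IBot a)"

abbreviation "ip \<equiv> IVar 0"
abbreviation "iq \<equiv> IVar 1"

definition mipc_axioms :: "ifm set" where
  "mipc_axioms =
    { IIff (IAll (IAnd ip iq)) (IAnd (IAll ip) (IAll iq)),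
      IImp (IAll ip) ip,
      IImp (IAll ip) (IAll (IAll ip)),
      IIff (IEx (IOr ip iq)) (IOr (IEx ip) (IEx iq)),
      IImp ip (IEx ip),
      IImp (IEx (IEx ip)) (IEx ip),
      IImp (IAnd (IEx ip) (IEx iq)) (IEx (IAnd (IEx ip) iq)),
      IImp (IEx (IAll ip)) (IAll ip),
      IImp (IEx ip) (IAll (IEx ip)) }"

inductive MIPC_plus :: "ifm set \<Rightarrow> ifm \<Rightarrow> bool" for Ax :: "ifm set" where
  ipc: "ipc_axiom a \<Longrightarrow> MIPC_plus Ax a"
| ax: "a \<in> mipc_axioms \<Longrightarrow> MIPC_plus Ax a"
| extra: "a \<in> Ax \<Longrightarrow> MIPC_plus Ax a"
| mp: "MIPC_plus Ax (IImp a b) \<Longrightarrow> MIPC_plus Ax a \<Longrightarrow> MIPC_plus Ax b"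
| subst: "MIPC_plus Ax a \<Longrightarrow> MIPC_plus Ax (isubst s a)"
| nec: "MIPC_plus Ax a \<Longrightarrow> MIPC_plus Ax (IAll a)"

definition kuroda_axiom :: ifm where
  "kuroda_axiom = IImp (IAll (INeg (INeg ip))) (INeg (INeg (IAll ip)))"

definition Kur :: "ifm \<Rightarrow> bool" where
  "Kur = MIPC_plus {kuroda_axiom}"

datatype mfm = MBot | MVar nat | MNot mfm | MAnd mfm mfm | MOr mfm mfm | MImp mfm mfm
  | MBox mfm | MAll mfm

definition MEx :: "mfm \<Rightarrow> mfm" where "MEx a = MNot (MAll (MNot a))"

primrec msubst :: "(nat \<Rightarrow> mfm) \<Rightarrow> mfm \<Rightarrow> mfm" where
  "msubst s MBot = MBot"
| "msubst s (MVar n) = s n"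
| "msubst s (MNot a) = MNot (msubst s a)"
| "msubst s (MAnd a b) = MAnd (msubst s a) (msubst s b)"
| "msubst s (MOr a b) = MOr (msubst s a) (msubst s b)"
| "msubst s (MImp a b) = MImp (msubst s a) (msubst s b)"
| "msubst s (MBox a) = MBox (msubst s a)"
| "msubst s (MAll a) = MAll (msubst s a)"

text \<open>Truth-functional evaluation where variables and modalised formulas are atoms;
  classical tautologies (in the modal language) are exactly the formulas true under
  every such evaluation, i.e. substitution instances of propositional tautologies.\<close>
primrec tev :: "(mfm \<Rightarrow> bool) \<Rightarrow> mfm \<Rightarrow> bool" where
  "tev v MBot = False"
| "tev v (MVar n) = v (MVar n)"
| "tev v (MNot a) = (\<not> tev v a)"
| "tev v (MAnd a b) = (tev v a \<and> tev v b)"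
| "tev v (MOr a b) = (tev v a \<or> tev v b)"
| "tev v (MImp a b) = (tev v a \<longrightarrow> tev v b)"
| "tev v (MBox a) = v (MBox a)"
| "tev v (MAll a) = v (MAll a)"

definition tautology :: "mfm \<Rightarrow> bool" where
  "tautology a \<longleftrightarrow> (\<forall>v. tev v a)"

abbreviation "mp \<equiv> MVar 0"
abbreviation "mq \<equiv> MVar 1"

definition ms4_axioms :: "mfm set" where
  "ms4_axioms =
    { MImp (MBox (MImp mp mq)) (MImp (MBox mp) (MBox mq)),
      MImp (MBox mp) mp,
      MImp (MBox mp) (MBox (MBox mp)),
      MImp (MAll (MImp mp mq)) (MImp (MAll mp) (MAll mq)),
      MImp (MAll mp) mp,
      MImp (MAll mp) (MAll (MAll mp)),
      MImp (MEx mp) (MAll (MEx mp)),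
      MImp (MBox (MAll mp)) (MAll (MBox mp)) }"

inductive MS4_plus :: "mfm set \<Rightarrow> mfm \<Rightarrow> bool" for Ax :: "mfm set" where
  taut: "tautology a \<Longrightarrow> MS4_plus Ax a"
| ax: "a \<in> ms4_axioms \<Longrightarrow> MS4_plus Ax a"
| extra: "a \<in> Ax \<Longrightarrow> MS4_plus Ax a"
| mp: "MS4_plus Ax (MImp a b) \<Longrightarrow> MS4_plus Ax a \<Longrightarrow> MS4_plus Ax b"
| subst: "MS4_plus Ax a \<Longrightarrow> MS4_plus Ax (msubst s a)"
| nec_box: "MS4_plus Ax a \<Longrightarrow> MS4_plus Ax (MBox a)"
| nec_all: "MS4_plus Ax a \<Longrightarrow> MS4_plus Ax (MAll a)"

primrec gt :: "ifm \<Rightarrow> mfm" where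
  "gt IBot = MBot"
| "gt (IVar n) = MBox (MVar n)"
| "gt (IAnd a b) = MAnd (gt a) (gt b)"
| "gt (IOr a b) = MOr (gt a) (gt b)"
| "gt (IImp a b) = MBox (MOr (MNot (gt a)) (gt b))"
| "gt (IAll a) = MBox (MAll (gt a))"
| "gt (IEx a) = MEx (gt a)"

definition GKur :: "mfm \<Rightarrow> bool" where
  "GKur = MS4_plus (gt ` {a. Kur a})"

definition clopenin :: "'a topology \<Rightarrow> 'a set \<Rightarrow> bool" where
  "clopenin T U \<longleftrightarrow> openin T U \<and> closedin T U"

definition stone_space :: "'a topology \<Rightarrow> bool" where
  "stone_space T \<longleftrightarrow> compact_space T \<and> Hausdorff_space T \<and>
     (\<forall>U x. openin T U \<and> x \<in> U \<longrightarrow> (\<exists>C. clopenin T C \<and> x \<in> C \<and> C \<subseteq> U))"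

definition continuous_rel :: "'a topology \<Rightarrow> 'a rel \<Rightarrow> bool" where
  "continuous_rel T R \<longleftrightarrow>
     (\<forall>x\<in>topspace T. closedin T (R `` {x})) \<and>
     (\<forall>U. clopenin T U \<longrightarrow> clopenin T (R\<inverse> `` U))"

definition descriptive_MS4_frame :: "'a topology \<Rightarrow> 'a rel \<Rightarrow> 'a rel \<Rightarrow> bool" where
  "descriptive_MS4_frame T R E \<longleftrightarrow>
     stone_space T \<and>
     R \<subseteq> topspace T \<times> topspace T \<and> refl_on (topspace T) R \<and> trans R \<and>
     E \<subseteq> topspace T \<times> topspace T \<and> equiv (topspace T) E \<and>
     continuous_rel T R \<and> continuous_rel T E \<and>
     (\<forall>x y z. (x, y) \<in> E \<and> (y, z) \<in> R \<longrightarrow> (\<exists>u. (x, u) \<in> R \<and> (u, z) \<in> E))"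

primrec msat :: "'a rel \<Rightarrow> 'a rel \<Rightarrow> (nat \<Rightarrow> 'a set) \<Rightarrow> 'a \<Rightarrow> mfm \<Rightarrow> bool" where
  "msat R E V x MBot = False"
| "msat R E V x (MVar n) = (x \<in> V n)"
| "msat R E V x (MNot a) = (\<not> msat R E V x a)"
| "msat R E V x (MAnd a b) = (msat R E V x a \<and> msat R E V x b)"
| "msat R E V x (MOr a b) = (msat R E V x a \<or> msat R E V x b)"
| "msat R E V x (MImp a b) = (msat R E V x a \<longrightarrow> msat R E V x b)"
| "msat R E V x (MBox a) = (\<forall>y. (x, y) \<in> R \<longrightarrow> msat R E V y a)"
| "msat R E V x (MAll a) = (\<forall>y. (x, y) \<in> E \<longrightarrow> msat R E V y a)"

definition frame_valid :: "'a topology \<Rightarrow> 'a rel \<Rightarrow> 'a rel \<Rightarrow> mfm \<Rightarrow> bool" where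
  "frame_valid T R E a \<longleftrightarrow>
     (\<forall>V. (\<forall>n. clopenin T (V n)) \<longrightarrow> (\<forall>x\<in>topspace T. msat R E V x a))"

definition validates :: "'a topology \<Rightarrow> 'a rel \<Rightarrow> 'a rel \<Rightarrow> (mfm \<Rightarrow> bool) \<Rightarrow> bool" where
  "validates T R E L \<longleftrightarrow> (\<forall>a. L a \<longrightarrow> frame_valid T R E a)"

definition qmax :: "'a set \<Rightarrow> 'a rel \<Rightarrow> 'a set" where
  "qmax Y R = {x \<in> Y. \<forall>y. (x, y) \<in> R \<longrightarrow> (y, x) \<in> R}"

end

theory Submission
  imports Defs
begin


lemma finite_chain_Inter:
  assumes "finite F" "F \<noteq> {}" "\<forall>A\<in>F. \<forall>B\<in>F. A \<subseteq> B \<or> B \<subseteq> A"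
  shows "\<Inter>F \<in> F"
  using assms
proof (induction F rule: finite_ne_induct)
  case (singleton x) then show ?case by simp
next
  case (insert x F)
  then have "\<Inter>F \<in> F" by blast
  moreover have "x \<subseteq> \<Inter>F \<or> \<Inter>F \<subseteq> x" using insert.prems calculation by blast
  ultimately show ?case by (auto simp: Int_absorb1 Int_absorb2)
qed

locale dframe =
  fixes T :: "'a topology" and R E :: "'a rel"
  assumes fr: "descriptive_MS4_frame T R E"
begin

abbreviation "Y \<equiv> topspace T"

lemma Rsub: "(x,y) \<in> R \<Longrightarrow> x \<in> Y \<and> y \<in> Y"
  using fr unfolding descriptive_MS4_frame_def by blast
lemma Esub: "(x,y) \<in> E \<Longrightarrow> x \<in> Y \<and> y \<in> Y"
  using fr unfolding descriptive_MS4_frame_def by blast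
lemma Rrefl: "x \<in> Y \<Longrightarrow> (x,x) \<in> R"
  using fr unfolding descriptive_MS4_frame_def refl_on_def by blast
lemma Rtrans: "(x,y) \<in> R \<Longrightarrow> (y,z) \<in> R \<Longrightarrow> (x,z) \<in> R"
  using fr unfolding descriptive_MS4_frame_def trans_def by blast
lemma Erefl: "x \<in> Y \<Longrightarrow> (x,x) \<in> E"
  using fr unfolding descriptive_MS4_frame_def equiv_def refl_on_def by blast
lemma Esym: "(x,y) \<in> E \<Longrightarrow> (y,x) \<in> E"
  using fr unfolding descriptive_MS4_frame_def equiv_def sym_def by blast
lemma Etrans: "(x,y) \<in> E \<Longrightarrow> (y,z) \<in> E \<Longrightarrow> (x,z) \<in> E"
  using fr unfolding descriptive_MS4_frame_def equiv_def trans_def by blast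
lemma comm: "(x,y) \<in> E \<Longrightarrow> (y,z) \<in> R \<Longrightarrow> \<exists>u. (x,u) \<in> R \<and> (u,z) \<in> E"
  using fr unfolding descriptive_MS4_frame_def by blast
lemma stone: "stone_space T"
  using fr unfolding descriptive_MS4_frame_def by blast
lemma Rcont: "continuous_rel T R"
  using fr unfolding descriptive_MS4_frame_def by blast
lemma Econt: "continuous_rel T E"
  using fr unfolding descriptive_MS4_frame_def by blast
lemma Rclosed: "x \<in> Y \<Longrightarrow> closedin T (R `` {x})"
  using Rcont unfolding continuous_rel_def by blast
lemma Rclopen: "clopenin T U \<Longrightarrow> clopenin T (R\<inverse> `` U)"
  using Rcont unfolding continuous_rel_def by blast
lemma Eclopen: "clopenin T U \<Longrightarrow> clopenin T (E\<inverse> `` U)"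
  using Econt unfolding continuous_rel_def by blast

lemma fine:
  assumes x: "x \<in> Y"
  shows "\<exists>m\<in>qmax Y R. (x,m) \<in> R"
proof -
  define A where "A = {- (R `` {w}) | w. (x,w) \<in> R}"
  have "\<exists>M\<in>A. \<forall>X\<in>A. M \<subseteq> X \<longrightarrow> X = M"
  proof (rule Zorn_Lemma2, intro ballI)
    fix C assume C: "C \<in> chains A"
    define U where "U = {R `` {w} | w. (x,w) \<in> R \<and> - (R `` {w}) \<in> C} \<union> {R `` {x}}"
    have Ucl: "\<forall>S\<in>U. closedin T S"
      unfolding U_def using Rclosed Rsub x by auto
    have Uch: "\<forall>S1\<in>U. \<forall>S2\<in>U. S1 \<subseteq> S2 \<or> S2 \<subseteq> S1"
    proof (intro ballI)
      fix S1 S2 assume "S1 \<in> U" "S2 \<in> U"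
      have sub: "R `` {w} \<subseteq> R `` {x}" if "(x,w) \<in> R" for w
        using that Rtrans by blast
      have ch: "\<forall>X1\<in>C. \<forall>X2\<in>C. X1 \<subseteq> X2 \<or> X2 \<subseteq> X1"
        using C unfolding chains_def chain_subset_def by blast
      show "S1 \<subseteq> S2 \<or> S2 \<subseteq> S1"
      proof -
        have c1: "S1 = R `` {x} \<or> (\<exists>w. S1 = R `` {w} \<and> (x,w) \<in> R \<and> - S1 \<in> C)"
          using \<open>S1 \<in> U\<close> unfolding U_def by blast
        have c2: "S2 = R `` {x} \<or> (\<exists>w. S2 = R `` {w} \<and> (x,w) \<in> R \<and> - S2 \<in> C)"
          using \<open>S2 \<in> U\<close> unfolding U_def by blast
        have "- S1 \<subseteq> - S2 \<or> - S2 \<subseteq> - S1" if "- S1 \<in> C" "- S2 \<in> C"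
          using ch that by blast
        then have "S1 \<subseteq> S2 \<or> S2 \<subseteq> S1" if "- S1 \<in> C" "- S2 \<in> C"
          using that by blast
        note h = this
        show ?thesis
          using c1 c2
        proof (elim disjE exE conjE)
          assume "S1 = R `` {x}" "S2 = R `` {x}" then show ?thesis by simp
        next
          fix w assume "S1 = R `` {x}" "S2 = R `` {w}" "(x,w) \<in> R"
          then show ?thesis using sub by blast
        next
          fix w assume "S2 = R `` {x}" "S1 = R `` {w}" "(x,w) \<in> R"
          then show ?thesis using sub by blast
        next
          fix w w' assume "- S1 \<in> C" "- S2 \<in> C"
          then show ?thesis using h by blast
        qed
      qed
    qed
    have "\<Inter>U \<noteq> {}"
    proof -
      have "\<forall>F. finite F \<and> F \<subseteq> U \<longrightarrow> \<Inter>F \<noteq> {}"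
      proof (intro allI impI)
        fix F assume F: "finite F \<and> F \<subseteq> U"
        show "\<Inter>F \<noteq> {}"
        proof (cases "F = {}")
          case True then show ?thesis by simp
        next
          case False
          then have "\<Inter>F \<in> F" using finite_chain_Inter[of F] F Uch by blast
          then have "\<Inter>F \<in> U" using F by blast
          then show ?thesis unfolding U_def using Rrefl Rsub x by blast
        qed
      qed
      then show ?thesis using stone Ucl unfolding stone_space_def compact_space_fip by blast
    qed
    then obtain v where v: "v \<in> \<Inter>U" by blast
    have xv: "(x,v) \<in> R" using v unfolding U_def by blast
    show "\<exists>Ub\<in>A. \<forall>X\<in>C. X \<subseteq> Ub"
    proof (intro bexI ballI)
      show "- (R `` {v}) \<in> A" unfolding A_def using xv by blast
      fix X assume "X \<in> C"
      then obtain w where w: "(x,w) \<in> R" "X = - (R `` {w})"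
        using C unfolding chains_def A_def by blast
      then have "v \<in> R `` {w}" using v \<open>X \<in> C\<close> unfolding U_def by blast
      then show "X \<subseteq> - (R `` {v})" using w Rtrans by blast
    qed
  qed
  then obtain M where M: "M \<in> A" "\<forall>X\<in>A. M \<subseteq> X \<longrightarrow> X = M" by blast
  then obtain m where m: "(x,m) \<in> R" "M = - (R `` {m})" unfolding A_def by blast
  have "m \<in> qmax Y R"
    unfolding qmax_def
  proof (intro CollectI conjI allI impI)
    show "m \<in> Y" using m Rsub by blast
    fix y assume my: "(m,y) \<in> R"
    have "- (R `` {y}) \<in> A" unfolding A_def using m my Rtrans by blast
    moreover have "M \<subseteq> - (R `` {y})" using m my Rtrans by blast
    ultimately have "- (R `` {y}) = M" using M by blast
    then have "R `` {y} = R `` {m}" using m by auto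
    moreover have "m \<in> R `` {m}" using Rrefl \<open>m \<in> Y\<close> by blast
    ultimately show "(y,m) \<in> R" by blast
  qed
  then show ?thesis using m by blast
qed


lemma clopen_diff: "clopenin T S \<Longrightarrow> clopenin T (Y - S)"
  unfolding clopenin_def by (simp add: openin_diff closedin_diff)
lemma clopen_Int: "clopenin T S \<Longrightarrow> clopenin T S' \<Longrightarrow> clopenin T (S \<inter> S')"
  unfolding clopenin_def by (simp add: openin_Int closedin_Int)
lemma clopen_Un: "clopenin T S \<Longrightarrow> clopenin T S' \<Longrightarrow> clopenin T (S \<union> S')"
  unfolding clopenin_def by (simp add: openin_Un closedin_Un)
lemma clopen_sub: "clopenin T S \<Longrightarrow> S \<subseteq> Y"
  unfolding clopenin_def by (simp add: closedin_subset)
lemma clopen_empty: "clopenin T {}"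
  unfolding clopenin_def by simp
lemma clopen_top: "clopenin T Y"
  unfolding clopenin_def by simp

lemma truth_clopen:
  assumes V: "\<forall>n. clopenin T (V n)"
  shows "clopenin T {x\<in>Y. msat R E V x a}"
proof (induction a)
  case MBot then show ?case by (simp add: clopen_empty)
next
  case (MVar n)
  have "{x\<in>Y. msat R E V x (MVar n)} = V n" using clopen_sub V by auto
  then show ?case using V by simp
next
  case (MNot a)
  have "{x\<in>Y. msat R E V x (MNot a)} = Y - {x\<in>Y. msat R E V x a}" by auto
  then show ?case using MNot clopen_diff by simp
next
  case (MAnd a b)
  have "{x\<in>Y. msat R E V x (MAnd a b)} = {x\<in>Y. msat R E V x a} \<inter> {x\<in>Y. msat R E V x b}" by auto
  then show ?case using MAnd clopen_Int by simp
next
  case (MOr a b)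
  have "{x\<in>Y. msat R E V x (MOr a b)} = {x\<in>Y. msat R E V x a} \<union> {x\<in>Y. msat R E V x b}" by auto
  then show ?case using MOr clopen_Un by simp
next
  case (MImp a b)
  have "{x\<in>Y. msat R E V x (MImp a b)} = (Y - {x\<in>Y. msat R E V x a}) \<union> {x\<in>Y. msat R E V x b}" by auto
  then show ?case using MImp clopen_Un clopen_diff by simp
next
  case (MBox a)
  have "{x\<in>Y. msat R E V x (MBox a)} = Y - R\<inverse> `` (Y - {x\<in>Y. msat R E V x a})"
    using Rsub by auto
  then show ?case using MBox clopen_diff Rclopen by simp
next
  case (MAll a)
  have "{x\<in>Y. msat R E V x (MAll a)} = Y - E\<inverse> `` (Y - {x\<in>Y. msat R E V x a})"
    using Esub by auto
  then show ?case using MAll clopen_diff Eclopen by simp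
qed

lemma msubst_sat:
  "x \<in> Y \<Longrightarrow> msat R E V x (msubst s a) = msat R E (\<lambda>n. {y\<in>Y. msat R E V y (s n)}) x a"
proof (induction a arbitrary: x)
  case (MBox a) then show ?case using Rsub by auto
next
  case (MAll a) then show ?case using Esub by auto
qed auto

lemma tev_sat: "tev (\<lambda>\<phi>. msat R E V x \<phi>) a = msat R E V x a"
  by (induction a) auto

lemma persist:
  "(x,y) \<in> R \<Longrightarrow> msat R E V x (gt a) \<Longrightarrow> msat R E V y (gt a)"
proof (induction a arbitrary: x y)
  case (IEx a)
  then obtain z where z: "(x,z) \<in> E" "msat R E V z (gt a)" by (auto simp: MEx_def)
  obtain u where u: "(z,u) \<in> R" "(u,y) \<in> E" using comm[OF Esym[OF z(1)] IEx.prems(1)] by blast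
  have "msat R E V u (gt a)" using IEx.IH u z by blast
  then show ?case using Esym[OF u(2)] by (auto simp: MEx_def)
qed (auto dest: Rtrans)

lemma gt_subst_sat:
  "x \<in> Y \<Longrightarrow> msat R E V x (gt (isubst s a)) = msat R E (\<lambda>n. {y\<in>Y. msat R E V y (gt (s n))}) x (gt a)"
proof (induction a arbitrary: x)
  case (IVar n)
  then show ?case using Rsub Rrefl persist by auto
next
  case (IImp a b) then show ?case using Rsub by auto
next
  case (IAll a) then show ?case using Rsub Esub by auto
next
  case (IEx a) then show ?case using Esub by (auto simp: MEx_def)
qed auto

definition gvalid :: "ifm \<Rightarrow> bool" where
  "gvalid a \<longleftrightarrow> (\<forall>V x. x \<in> Y \<longrightarrow> msat R E V x (gt a))"

lemma ipc_valid: "ipc_axiom a \<Longrightarrow> gvalid a"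
  unfolding gvalid_def
proof (induction rule: ipc_axiom.induct)
  case (1 a b) then show ?case using persist by auto
next
  case (2 a b c) then show ?case using Rsub Rrefl Rtrans by simp blast
next
  case (3 a b) then show ?case using persist by auto
next
  case (4 a b) then show ?case using persist by auto
next
  case (5 a b) then show ?case using persist by auto
next
  case (6 a b) then show ?case using persist by auto
next
  case (7 a b) then show ?case using persist by auto
next
  case (8 a c b) then show ?case using Rsub Rrefl Rtrans by simp blast
next
  case (9 a) then show ?case by auto
qed


end

context dframe begin

lemma sat_imp: "msat R E V x (gt (IImp a b)) = (\<forall>y. (x,y) \<in> R \<longrightarrow> msat R E V y (gt a) \<longrightarrow> msat R E V y (gt b))"
  by auto
lemma sat_neg: "msat R E V x (gt (INeg a)) = (\<forall>y. (x,y) \<in> R \<longrightarrow> \<not> msat R E V y (gt a))"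
  by (auto simp: INeg_def)
lemma sat_all: "msat R E V x (gt (IAll a)) = (\<forall>y. (x,y) \<in> R \<longrightarrow> (\<forall>e. (y,e) \<in> E \<longrightarrow> msat R E V e (gt a)))"
  by auto
lemma sat_and: "msat R E V x (gt (IAnd a b)) = (msat R E V x (gt a) \<and> msat R E V x (gt b))"
  by simp
lemma sat_or: "msat R E V x (gt (IOr a b)) = (msat R E V x (gt a) \<or> msat R E V x (gt b))"
  by simp
lemma sat_ex: "msat R E V x (gt (IEx a)) = (\<exists>e. (x,e) \<in> E \<and> msat R E V e (gt a))"
  by (auto simp: MEx_def)
lemma sat_var: "msat R E V x (gt (IVar n)) = (\<forall>y. (x,y) \<in> R \<longrightarrow> y \<in> V n)"
  by auto


lemma ax1: "x \<in> Y \<Longrightarrow> msat R E V x (gt (IIff (IAll (IAnd ip iq)) (IAnd (IAll ip) (IAll iq))))"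
  unfolding IIff_def sat_and sat_imp sat_all sat_var by blast
lemma ax2: "x \<in> Y \<Longrightarrow> msat R E V x (gt (IImp (IAll ip) ip))"
  unfolding sat_imp sat_all sat_var
proof (intro allI impI)
  fix y u assume H: "\<forall>ya. (y, ya) \<in> R \<longrightarrow> (\<forall>e. (ya, e) \<in> E \<longrightarrow> (\<forall>y. (e, y) \<in> R \<longrightarrow> y \<in> V 0))"
    and "(x,y) \<in> R" "(y,u) \<in> R"
  then have "(y,y) \<in> R" "(y,y) \<in> E" using Rsub Rrefl Erefl by blast+
  then show "u \<in> V 0" using H \<open>(y,u) \<in> R\<close> by blast
qed
lemma ax4: "x \<in> Y \<Longrightarrow> msat R E V x (gt (IIff (IEx (IOr ip iq)) (IOr (IEx ip) (IEx iq))))"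
  unfolding IIff_def sat_and sat_imp sat_ex sat_or by blast
lemma ax5: "x \<in> Y \<Longrightarrow> msat R E V x (gt (IImp ip (IEx ip)))"
  unfolding sat_imp sat_ex
proof (intro allI impI)
  fix y assume "(x,y) \<in> R" "msat R E V y (gt ip)"
  moreover have "(y,y) \<in> E" using Rsub Erefl \<open>(x,y) \<in> R\<close> by blast
  ultimately show "\<exists>e. (y, e) \<in> E \<and> msat R E V e (gt ip)" by blast
qed
lemma ax6: "x \<in> Y \<Longrightarrow> msat R E V x (gt (IImp (IEx (IEx ip)) (IEx ip)))"
  unfolding sat_imp sat_ex using Etrans by blast
lemma ax7: "x \<in> Y \<Longrightarrow> msat R E V x (gt (IImp (IAnd (IEx ip) (IEx iq)) (IEx (IAnd (IEx ip) iq))))"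
  unfolding sat_imp sat_ex sat_and
proof (intro allI impI)
  fix y assume h: "(x,y) \<in> R" "(\<exists>e. (y, e) \<in> E \<and> msat R E V e (gt ip)) \<and> (\<exists>e. (y, e) \<in> E \<and> msat R E V e (gt iq))"
  then obtain e1 e2 where e: "(y,e1) \<in> E" "msat R E V e1 (gt ip)" "(y,e2) \<in> E" "msat R E V e2 (gt iq)" by blast
  have "(e2,e1) \<in> E" using Etrans[OF Esym[OF e(3)] e(1)] .
  then show "\<exists>e. (y, e) \<in> E \<and> (\<exists>ea. (e, ea) \<in> E \<and> msat R E V ea (gt ip)) \<and> msat R E V e (gt iq)"
    using e by blast
qed

lemma ax3: "x \<in> Y \<Longrightarrow> msat R E V x (gt (IImp (IAll ip) (IAll (IAll ip))))"
  unfolding sat_imp sat_all sat_var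
proof (intro allI impI)
  fix x' y e z e' f
  assume H: "\<forall>y. (x', y) \<in> R \<longrightarrow> (\<forall>e. (y, e) \<in> E \<longrightarrow> (\<forall>ya. (e, ya) \<in> R \<longrightarrow> ya \<in> V 0))"
    and h: "(x',y) \<in> R" "(y,e) \<in> E" "(e,z) \<in> R" "(z,e') \<in> E" "(e',f) \<in> R"
  obtain u where u: "(y,u) \<in> R" "(u,z) \<in> E" using comm h by blast
  have "(u,e') \<in> E" using u h Etrans by blast
  have "(x',u) \<in> R" using h u Rtrans by blast
  then show "f \<in> V 0" using H \<open>(u,e') \<in> E\<close> h by blast
qed


lemma ax8: "x \<in> Y \<Longrightarrow> msat R E V x (gt (IImp (IEx (IAll ip)) (IAll ip)))"
  unfolding sat_imp sat_all sat_var sat_ex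
proof (intro allI impI)
  fix x' x'' f w
  assume h: "(x,x') \<in> R" "\<exists>e. (x',e) \<in> E \<and> (\<forall>y. (e, y) \<in> R \<longrightarrow> (\<forall>ea. (y, ea) \<in> E \<longrightarrow> (\<forall>y. (ea, y) \<in> R \<longrightarrow> y \<in> V 0)))"
    "(x',x'') \<in> R" "(x'',f) \<in> E" "(f,w) \<in> R"
  then obtain e where e: "(x',e) \<in> E" "\<forall>y. (e, y) \<in> R \<longrightarrow> (\<forall>ea. (y, ea) \<in> E \<longrightarrow> (\<forall>y. (ea, y) \<in> R \<longrightarrow> y \<in> V 0))"
    by blast
  obtain u where u: "(e,u) \<in> R" "(u,x'') \<in> E" using comm[OF Esym[OF e(1)] h(3)] by blast
  have "(u,f) \<in> E" using Etrans[OF u(2) h(4)] .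
  then show "w \<in> V 0" using e u h by blast
qed

lemma ax9: "x \<in> Y \<Longrightarrow> msat R E V x (gt (IImp (IEx ip) (IAll (IEx ip))))"
  unfolding sat_imp sat_all
proof (intro allI impI)
  fix x' y e assume h: "(x,x') \<in> R" "msat R E V x' (gt (IEx ip))" "(x',y) \<in> R" "(y,e) \<in> E"
  have "msat R E V y (gt (IEx ip))" using persist h by blast
  then obtain d where d: "(y,d) \<in> E" "msat R E V d (gt ip)" unfolding sat_ex by blast
  have "(e,d) \<in> E" using Etrans[OF Esym[OF h(4)] d(1)] .
  then show "msat R E V e (gt (IEx ip))" unfolding sat_ex using d by blast
qed

lemma mipc_valid: "a \<in> mipc_axioms \<Longrightarrow> gvalid a"
  unfolding gvalid_def
proof (intro allI impI)
  fix V x assume a: "a \<in> mipc_axioms" and x: "x \<in> Y"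
  from a show "msat R E V x (gt a)"
    unfolding mipc_axioms_def
    by (elim insertE emptyE)
      (simp_all only: ax1[OF x] ax2[OF x] ax3[OF x] ax4[OF x] ax5[OF x] ax6[OF x] ax7[OF x] ax8[OF x] ax9[OF x])
qed

end

context dframe begin
lemma qmax_up: "m \<in> qmax Y R \<Longrightarrow> (m,m') \<in> R \<Longrightarrow> m' \<in> qmax Y R"
  unfolding qmax_def using Rsub Rtrans by blast

lemma kur_ax:
  assumes Q: "E `` qmax Y R = qmax Y R" and x: "x \<in> Y"
  shows "msat R E V x (gt kuroda_axiom)"
  unfolding kuroda_axiom_def sat_imp
proof (intro allI impI)
  fix x1 assume xx1: "(x,x1) \<in> R" and A: "msat R E V x1 (gt (IAll (INeg (INeg ip))))"
  show "msat R E V x1 (gt (INeg (INeg (IAll ip))))"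
    unfolding sat_neg
  proof (intro allI impI)
    fix y assume x1y: "(x1,y) \<in> R"
    obtain m where m: "m \<in> qmax Y R" "(y,m) \<in> R" using fine Rsub x1y by blast
    have "msat R E V m (gt (IAll ip))"
      unfolding sat_all sat_var
    proof (intro allI impI)
      fix m' e u assume mm': "(m,m') \<in> R" and me: "(m',e) \<in> E" and eu: "(e,u) \<in> R"
      have "m' \<in> qmax Y R" using qmax_up m mm' by blast
      then have eq: "e \<in> qmax Y R" using Q me by blast
      have "(x1,m') \<in> R" using x1y m mm' Rtrans by blast
      then have "msat R E V e (gt (INeg (INeg ip)))" using A me unfolding sat_all by blast
      moreover have "(e,e) \<in> R" using eq Rrefl unfolding qmax_def by blast
      ultimately have "\<not> msat R E V e (gt (INeg ip))" unfolding sat_neg by blast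
      then obtain v where v: "(e,v) \<in> R" "msat R E V v (gt ip)" unfolding sat_neg by blast
      have "(v,e) \<in> R" using eq v unfolding qmax_def by blast
      then have "(v,u) \<in> R" using eu Rtrans by blast
      then show "u \<in> V 0" using v unfolding sat_var by blast
    qed
    then show "\<not> (\<forall>z. (y, z) \<in> R \<longrightarrow> \<not> msat R E V z (gt (IAll ip)))" using m by blast
  qed
qed

lemma kur_sound:
  assumes Q: "E `` qmax Y R = qmax Y R" and K: "Kur a"
  shows "\<forall>V. (\<forall>n. clopenin T (V n)) \<longrightarrow> (\<forall>x\<in>Y. msat R E V x (gt a))"
  using K unfolding Kur_def
proof (induction rule: MIPC_plus.induct)
  case (ipc a) then show ?case using ipc_valid unfolding gvalid_def by blast
next
  case (ax a) then show ?case using mipc_valid unfolding gvalid_def by blast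
next
  case (extra a) then show ?case using kur_ax[OF Q] by blast
next
  case (mp a b)
  show ?case
  proof (intro allI impI ballI)
    fix V :: "nat \<Rightarrow> 'a set" and x assume V: "\<forall>n. clopenin T (V n)" and x: "x \<in> Y"
    have "msat R E V x (gt (IImp a b))" using mp.IH(1) V x by blast
    moreover have "msat R E V x (gt a)" using mp.IH(2) V x by blast
    ultimately show "msat R E V x (gt b)" using Rrefl[OF x] unfolding sat_imp by blast
  qed
next
  case (subst a s)
  show ?case
  proof (intro allI impI ballI)
    fix V :: "nat \<Rightarrow> 'a set" and x assume V: "\<forall>n. clopenin T (V n)" and x: "x \<in> Y"
    have V': "\<forall>n. clopenin T {y\<in>Y. msat R E V y (gt (s n))}" using truth_clopen[OF V] by blast
    show "msat R E V x (gt (isubst s a))"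
      unfolding gt_subst_sat[OF x] by (rule subst.IH[rule_format]) (use V' x in auto)
  qed
next
  case (nec a)
  then show ?case unfolding sat_all using Esub by blast
qed

lemma m1: "msat R E V x (MImp (MBox (MImp mp mq)) (MImp (MBox mp) (MBox mq)))" by simp
lemma m2: "x \<in> Y \<Longrightarrow> msat R E V x (MImp (MBox mp) mp)" using Rrefl by simp
lemma m3: "msat R E V x (MImp (MBox mp) (MBox (MBox mp)))" using Rtrans by simp
lemma m4: "msat R E V x (MImp (MAll (MImp mp mq)) (MImp (MAll mp) (MAll mq)))" by simp
lemma m5: "x \<in> Y \<Longrightarrow> msat R E V x (MImp (MAll mp) mp)" using Erefl by simp
lemma m6: "msat R E V x (MImp (MAll mp) (MAll (MAll mp)))" using Etrans by simp
lemma m7: "msat R E V x (MImp (MEx mp) (MAll (MEx mp)))"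
proof -
  have "\<exists>e. (y,e) \<in> E \<and> e \<in> V 0" if "(x,e) \<in> E" "e \<in> V 0" "(x,y) \<in> E" for e y
    using Etrans[OF Esym[OF that(3)] that(1)] that(2) by blast
  then show ?thesis by (simp add: MEx_def) blast
qed
lemma m8: "msat R E V x (MImp (MBox (MAll mp)) (MAll (MBox mp)))"
proof (simp only: msat.simps, intro impI allI)
  fix y z assume H: "\<forall>y. (x, y) \<in> R \<longrightarrow> (\<forall>ya. (y, ya) \<in> E \<longrightarrow> ya \<in> V 0)"
    and h: "(x,y) \<in> E" "(y,z) \<in> R"
  obtain u where "(x,u) \<in> R" "(u,z) \<in> E" using comm h by blast
  then show "z \<in> V 0" using H by blast
qed

lemma ms4_valid: assumes "a \<in> ms4_axioms" "x \<in> Y" shows "msat R E V x a"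
  using assms(1)
  unfolding ms4_axioms_def
  by (elim insertE emptyE)
    (simp_all only: m1 m2 m3 m4 m5 m6 m7 m8 \<open>x \<in> Y\<close>)

lemma gkur_sound:
  assumes Q: "E `` qmax Y R = qmax Y R" and G: "GKur a"
  shows "\<forall>V. (\<forall>n. clopenin T (V n)) \<longrightarrow> (\<forall>x\<in>Y. msat R E V x a)"
  using G unfolding GKur_def
proof (induction rule: MS4_plus.induct)
  case (taut a)
  show ?case
  proof (intro allI impI ballI)
    fix V :: "nat \<Rightarrow> 'a set" and x
    have "tev (\<lambda>\<phi>. msat R E V x \<phi>) a" using taut unfolding tautology_def by blast
    then show "msat R E V x a" using tev_sat by simp
  qed
next
  case (ax a) then show ?case using ms4_valid by blast
next
  case (extra a) then show ?case using kur_sound[OF Q] by blast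
next
  case (mp a b)
  show ?case
  proof (intro allI impI ballI)
    fix V :: "nat \<Rightarrow> 'a set" and x assume V: "\<forall>n. clopenin T (V n)" and x: "x \<in> Y"
    have "msat R E V x (MImp a b)" using mp.IH(1) V x by blast
    moreover have "msat R E V x a" using mp.IH(2) V x by blast
    ultimately show "msat R E V x b" by simp
  qed
next
  case (subst a s)
  show ?case
  proof (intro allI impI ballI)
    fix V :: "nat \<Rightarrow> 'a set" and x assume V: "\<forall>n. clopenin T (V n)" and x: "x \<in> Y"
    have V': "\<forall>n. clopenin T {y\<in>Y. msat R E V y (s n)}" using truth_clopen[OF V] by blast
    show "msat R E V x (msubst s a)"
      unfolding msubst_sat[OF x] by (rule subst.IH[rule_format]) (use V' x in auto)
  qed
next
  case (nec_box a) then show ?case using Rsub by (simp only: msat.simps) blast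
next
  case (nec_all a) then show ?case using Esub by (simp only: msat.simps) blast
qed

end

context dframe begin

lemma kur_in_GKur: "GKur (gt kuroda_axiom)"
  unfolding GKur_def
  by (rule MS4_plus.extra) (auto simp: Kur_def intro: MIPC_plus.extra)

lemma kur_complete:
  assumes valid: "validates T R E GKur"
  shows "E `` qmax Y R \<subseteq> qmax Y R"
proof
  fix y assume "y \<in> E `` qmax Y R"
  then obtain x where x: "x \<in> qmax Y R" "(x,y) \<in> E" by blast
  have xY: "x \<in> Y" using x unfolding qmax_def by blast
  have yY: "y \<in> Y" using Esub x(2) by blast
  show "y \<in> qmax Y R"
  proof (rule ccontr)
    assume "y \<notin> qmax Y R"
    then obtain z0 where z0: "(y,z0) \<in> R" "(z0,y) \<notin> R" using yY unfolding qmax_def by blast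
    have z0Y: "z0 \<in> Y" using Rsub z0 by blast
    have "openin T (Y - R `` {z0})" using Rclosed[OF z0Y] by (simp add: openin_diff)
    moreover have "y \<in> Y - R `` {z0}" using yY z0 by blast
    ultimately obtain N where N: "clopenin T N" "y \<in> N" "N \<subseteq> Y - R `` {z0}"
      using stone unfolding stone_space_def by blast
    define D where "D = {r\<in>Y. \<forall>s. (r,s) \<in> R \<longrightarrow> (\<exists>t. (s,t) \<in> R \<and> t \<in> N)}"
    have "D = Y - R\<inverse> `` (Y - R\<inverse> `` N)"
      unfolding D_def using Rsub by blast
    then have Dc: "clopenin T D" using Rclopen clopen_diff N(1) by simp
    define N' where "N' = N \<inter> (Y - D)"
    have N'c: "clopenin T N'" unfolding N'_def using clopen_Int clopen_diff Dc N(1) by blast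
    define P where "P = Y - N'"
    have Pc: "clopenin T P" unfolding P_def using clopen_diff N'c by blast
    define V where "V = (\<lambda>n::nat. P)"
    have Vc: "\<forall>n. clopenin T (V n)" unfolding V_def using Pc by blast
    have K: "msat R E V x (gt kuroda_axiom)"
      using valid kur_in_GKur Vc xY unfolding validates_def frame_valid_def by blast
    have claim1: "\<exists>v. (w,v) \<in> R \<and> (\<forall>u. (v,u) \<in> R \<longrightarrow> u \<in> P)" if wY: "w \<in> Y" for w
    proof (rule ccontr)
      assume "\<not> (\<exists>v. (w,v) \<in> R \<and> (\<forall>u. (v,u) \<in> R \<longrightarrow> u \<in> P))"
      then have H: "\<forall>v. (w,v) \<in> R \<longrightarrow> (\<exists>u. (v,u) \<in> R \<and> u \<in> N')"
        unfolding P_def using Rsub by blast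
      obtain u where u: "(w,u) \<in> R" "u \<in> N'" using H Rrefl[OF wY] by blast
      have "u \<in> D"
        unfolding D_def
      proof (intro CollectI conjI allI impI)
        show "u \<in> Y" using u Rsub by blast
        fix s assume "(u,s) \<in> R"
        then have "(w,s) \<in> R" using u Rtrans by blast
        then show "\<exists>t. (s,t) \<in> R \<and> t \<in> N" using H unfolding N'_def by blast
      qed
      then show False using u unfolding N'_def by blast
    qed
    have A: "msat R E V x (gt (IAll (INeg (INeg ip))))"
      unfolding sat_all sat_neg sat_var
    proof (intro allI impI)
      fix x' e w assume "(x,x') \<in> R" "(x',e) \<in> E" "(e,w) \<in> R"
      then have "w \<in> Y" using Rsub by blast
      then show "\<not> (\<forall>y. (w, y) \<in> R \<longrightarrow> \<not> (\<forall>y'. (y, y') \<in> R \<longrightarrow> y' \<in> V 0))"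
        using claim1 unfolding V_def by blast
    qed
    have "msat R E V x (gt (INeg (INeg (IAll ip))))"
      using K A Rrefl[OF xY] unfolding kuroda_axiom_def sat_imp by blast
    then obtain z where z: "(x,z) \<in> R" "msat R E V z (gt (IAll ip))"
      using Rrefl[OF xY] unfolding sat_neg by blast
    have "(z,x) \<in> R" using x(1) z(1) unfolding qmax_def by blast
    then have "y \<in> P" using z(2) x(2) Rrefl[OF yY] unfolding sat_all sat_var V_def by blast
    moreover have "y \<notin> D"
    proof
      assume "y \<in> D"
      then obtain t where "(z0,t) \<in> R" "t \<in> N" using z0 unfolding D_def by blast
      then show False using N(3) by blast
    qed
    ultimately show False using N(2) yY unfolding P_def N'_def by blast
  qed
qed

end

theorem theorem3p15:
  fixes T :: "'a topology" and R E :: "'a rel"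
  assumes "descriptive_MS4_frame T R E"
  shows "validates T R E GKur \<longleftrightarrow> E `` qmax (topspace T) R = qmax (topspace T) R"
proof -
  interpret dframe T R E by (rule dframe.intro[OF assms])
  show ?thesis
  proof
    assume "validates T R E GKur"
    then have sub: "E `` qmax (topspace T) R \<subseteq> qmax (topspace T) R" by (rule kur_complete)
    have "qmax (topspace T) R \<subseteq> E `` qmax (topspace T) R" using Erefl unfolding qmax_def by blast
    then show "E `` qmax (topspace T) R = qmax (topspace T) R" using sub by blast
  next
    assume Q: "E `` qmax (topspace T) R = qmax (topspace T) R"
    show "validates T R E GKur"
      unfolding validates_def frame_valid_def using gkur_sound[OF Q] by blast
  qed
qed

end
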